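(* In the MAD-HTLC game starting from its initial subgame (first of the $T$ rounds, with the deposit contract MH-Dep still redeemable), if Alice ($\mathcal{A}$) knows the preimage $\textit{pre}_a$ and $\mathcal{A}$ and Bob ($\mathcal{B}$) both follow the prescribed strategies, then the miners' best-response strategy leads to $\mathcal{A}$ redeeming MH-Dep for $v^{\text{dep}} - f^{\text{dep}}_{\mathcal{A}}$ tokens, and $\mathcal{B}$ redeeming MH-Col for $v^{\text{col}} - f^{\text{col}}_{\mathcal{B}}$ tokens.
   Context: Setting: a blockchain where in each of $T$ rounds $\mathcal{A}$ and $\mathcal{B}$ may publish transactions to a public mempool, then one miner (chosen with probability equal to her mining power) creates a block containing one transaction of her choice and collects its fee; there is always an unrelated mempool transaction paying the base fee $f$. Miners and users are rational, non-myopic, and maximize expected tokens at game end. MAD-HTLC is initiated in some block and consists of two contracts parameterized by hash digests $\textit{dig}_a = H(\textit{pre}_a)$, $\textit{dig}_b = H(\textit{pre}_b)$ (only $\mathcal{B}$ knows $\textit{pre}_b$) and timeout $T$. MH-Dep holds $v^{\text{dep}}$ tokens and is redeemable (i) by $\mathcal{A}$ with $\textit{pre}_a$ and her signature at any time, (ii) by $\mathcal{B}$ with $\textit{pre}_b$ and his signature after $T$ blocks, or (iii) by anyone presenting both $\textit{pre}_a$ and $\textit{pre}_b$. MH-Col holds $v^{\text{col}}$ tokens and is redeemable only after $T$ blocks, either by $\mathcal{B}$ with his signature or by anyone presenting both preimages. Prescribed strategy: if $\mathcal{A}$ knows $\textit{pre}_a$ she publishes, during the first $T-1$ rounds, a transaction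 redeeming MH-Dep via path (i) with fee $f^{\text{dep}}_{\mathcal{A}}$, where $f < f^{\text{dep}}_{\mathcal{A}} < v^{\text{dep}}$; if $\mathcal{A}$ published it, $\mathcal{B}$ publishes in round $T$ a transaction redeeming only MH-Col via his signature path with fee $f^{\text{col}}_{\mathcal{B}}$, where $f < f^{\text{col}}_{\mathcal{B}} < v^{\text{col}}$ (otherwise $\mathcal{B}$ redeems both contracts). The game is analyzed via subgame perfect equilibrium and backward induction. *)

theory Defs
  imports Main "HOL-Library.FuncSet" Complex_Main
begin

text \<open>
  Model of the MAD-HTLC game after Alice has published her transaction and
  with Alice and Bob fixed to their prescribed strategies.
  Rounds are numbered 1..T.  A history is the list of blocks created so far,
  each block recorded as (miner who created it, transaction included).
  Alice publishes tx_A (redeeming MH-Dep via path (i), fee fA) in round j,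
  with 1 <= j <= T-1; Bob publishes tx_B (redeeming MH-Col via his signature
  path, fee fB) in round T.  Nobody but Bob knows pre_b, so no miner can
  use the preimage-pair paths; hence a miner's only options are the unrelated
  transaction (base fee f), tx_A (once published and not yet included),
  and tx_B (in round T, not yet included).
\<close>

datatype mh_action = Unrelated | Incl_Dep | Incl_Col

type_synonym 'm mh_hist = "('m \<times> mh_action) list"

definition mh_fee :: "real \<Rightarrow> real \<Rightarrow> real \<Rightarrow> mh_action \<Rightarrow> real" where
  "mh_fee f fA fB a = (case a of Unrelated \<Rightarrow> f | Incl_Dep \<Rightarrow> fA | Incl_Col \<Rightarrow> fB)"

definition mh_avail :: "nat \<Rightarrow> nat \<Rightarrow> 'm mh_hist \<Rightarrow> mh_action \<Rightarrow> bool" where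
  "mh_avail T j h a \<longleftrightarrow>
     a = Unrelated
   \<or> (a = Incl_Dep \<and> j \<le> Suc (length h) \<and> Incl_Dep \<notin> snd ` set h)
   \<or> (a = Incl_Col \<and> Suc (length h) = T \<and> Incl_Col \<notin> snd ` set h)"

definition mh_valid_hist :: "'m set \<Rightarrow> nat \<Rightarrow> nat \<Rightarrow> 'm mh_hist \<Rightarrow> bool" where
  "mh_valid_hist M T j h \<longleftrightarrow> length h \<le> T \<and>
     (\<forall>k < length h. fst (h ! k) \<in> M \<and> mh_avail T j (take k h) (snd (h ! k)))"

definition mh_valid_strategy :: "'m set \<Rightarrow> nat \<Rightarrow> nat \<Rightarrow> ('m mh_hist \<Rightarrow> mh_action) \<Rightarrow> bool" where
  "mh_valid_strategy M T j s \<longleftrightarrow>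
     (\<forall>h. mh_valid_hist M T j h \<and> length h < T \<longrightarrow> mh_avail T j h (s h))"

text \<open>Expected tokens miner i collects in the remaining n rounds, starting at
  the chance node after history h (the round's miner not yet drawn),
  under strategy profile \<sigma>; pw m is the mining power of m.\<close>
fun mh_cont_util :: "(mh_action \<Rightarrow> real) \<Rightarrow> 'm set \<Rightarrow> ('m \<Rightarrow> real)
    \<Rightarrow> ('m \<Rightarrow> 'm mh_hist \<Rightarrow> mh_action) \<Rightarrow> 'm \<Rightarrow> nat \<Rightarrow> 'm mh_hist \<Rightarrow> real" where
  "mh_cont_util fe M pw \<sigma> i 0 h = 0"
| "mh_cont_util fe M pw \<sigma> i (Suc n) h =
     (\<Sum>m\<in>M. pw m * ((if m = i then fe (\<sigma> m h) else 0)
                     + mh_cont_util fe M pw \<sigma> i n (h @ [(m, \<sigma> m h)])))"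

text \<open>Expected tokens of miner i at the decision node where miner m has been
  selected to create the block of round length h + 1.\<close>
definition mh_dec_util :: "(mh_action \<Rightarrow> real) \<Rightarrow> 'm set \<Rightarrow> ('m \<Rightarrow> real) \<Rightarrow> nat
    \<Rightarrow> ('m \<Rightarrow> 'm mh_hist \<Rightarrow> mh_action) \<Rightarrow> 'm \<Rightarrow> 'm mh_hist \<Rightarrow> 'm \<Rightarrow> real" where
  "mh_dec_util fe M pw T \<sigma> i h m =
     (if m = i then fe (\<sigma> m h) else 0)
     + mh_cont_util fe M pw \<sigma> i (T - Suc (length h)) (h @ [(m, \<sigma> m h)])"

definition mh_SPE :: "real \<Rightarrow> real \<Rightarrow> real \<Rightarrow> 'm set \<Rightarrow> ('m \<Rightarrow> real) \<Rightarrow> nat \<Rightarrow> nat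
    \<Rightarrow> ('m \<Rightarrow> 'm mh_hist \<Rightarrow> mh_action) \<Rightarrow> bool" where
  "mh_SPE f fA fB M pw T j \<sigma> \<longleftrightarrow>
     (\<forall>m\<in>M. mh_valid_strategy M T j (\<sigma> m))
   \<and> (\<forall>h i \<tau>. mh_valid_hist M T j h \<and> length h < T \<and> i \<in> M \<and> mh_valid_strategy M T j \<tau> \<longrightarrow>
        mh_cont_util (mh_fee f fA fB) M pw (\<sigma>(i := \<tau>)) i (T - length h) h
          \<le> mh_cont_util (mh_fee f fA fB) M pw \<sigma> i (T - length h) h)
   \<and> (\<forall>h i m \<tau>. mh_valid_hist M T j h \<and> length h < T \<and> i \<in> M \<and> m \<in> M
          \<and> mh_valid_strategy M T j \<tau> \<longrightarrow>
        mh_dec_util (mh_fee f fA fB) M pw T (\<sigma>(i := \<tau>)) i h m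
          \<le> mh_dec_util (mh_fee f fA fB) M pw T \<sigma> i h m)"

fun mh_run :: "('m \<Rightarrow> 'm mh_hist \<Rightarrow> mh_action) \<Rightarrow> 'm mh_hist \<Rightarrow> 'm list \<Rightarrow> 'm mh_hist" where
  "mh_run \<sigma> h [] = h"
| "mh_run \<sigma> h (m # ms) = mh_run \<sigma> (h @ [(m, \<sigma> m h)]) ms"

text \<open>Tokens Alice / Bob hold at game end (under the prescribed strategies
  Alice can only obtain MH-Dep via tx_A, Bob only MH-Col via tx_B).\<close>
definition tokens_A :: "real \<Rightarrow> real \<Rightarrow> 'm mh_hist \<Rightarrow> real" where
  "tokens_A vdep fA H = (if Incl_Dep \<in> snd ` set H then vdep - fA else 0)"

definition tokens_B :: "real \<Rightarrow> real \<Rightarrow> 'm mh_hist \<Rightarrow> real" where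
  "tokens_B vcol fB H = (if Incl_Col \<in> snd ` set H then vcol - fB else 0)"

end

theory Submission
  imports Defs
begin

definition gS :: "real \<Rightarrow> real \<Rightarrow> nat \<Rightarrow> nat \<Rightarrow> 'm mh_hist \<Rightarrow> mh_action" where
  "gS fA fB T j h = (if Suc (length h) = T
      then (if Incl_Dep \<notin> snd ` set h \<and> fB < fA then Incl_Dep else Incl_Col)
      else if Incl_Dep \<notin> snd ` set h \<and> j \<le> Suc (length h) then Incl_Dep else Unrelated)"

definition WV :: "real \<Rightarrow> real \<Rightarrow> real \<Rightarrow> nat \<Rightarrow> bool \<Rightarrow> real" where
  "WV f fA fB n d = (if n = 0 then 0 else if d then (if n = 1 then max fA fB
      else fA + real (n-2) * f + fB) else real (n-1) * f + fB)"

lemma valid_nocol: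
  assumes "mh_valid_hist M T j h" "length h < T"
  shows "Incl_Col \<notin> snd ` set h"
proof
  assume "Incl_Col \<in> snd ` set h"
  then obtain x where "x \<in> set h" "snd x = Incl_Col" by auto
  then obtain k where k: "k < length h" "h ! k = x" by (auto simp: in_set_conv_nth)
  have "mh_avail T j (take k h) (snd (h ! k))" using assms k unfolding mh_valid_hist_def by auto
  then show False using k \<open>snd x = Incl_Col\<close> assms(2) by (auto simp: mh_avail_def)
qed

lemma valid_snoc:
  assumes "mh_valid_hist M T j h" "length h < T" "m \<in> M" "mh_avail T j h a"
  shows "mh_valid_hist M T j (h @ [(m, a)])"
  using assms unfolding mh_valid_hist_def
  by (auto simp: nth_append less_Suc_eq)

lemma gS_avail:
  assumes "mh_valid_hist M T j h" "length h < T" "j \<le> T"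
  shows "mh_avail T j h (gS fA fB T j h)"
  using valid_nocol[OF assms(1,2)] assms(3) by (auto simp: gS_def mh_avail_def)

lemma step_eq:
  assumes "length h < T" "j \<le> T - 1"
  shows "mh_fee f fA fB (gS fA fB T j h)
     + WV f fA fB (T - Suc (length h)) (Incl_Dep \<notin> snd ` set h \<and> gS fA fB T j h \<noteq> Incl_Dep)
     = WV f fA fB (T - length h) (Incl_Dep \<notin> snd ` set h)"
proof -
  consider "Suc (length h) = T" | "Suc (Suc (length h)) = T" | "Suc (Suc (length h)) < T"
    using assms by linarith
  then show ?thesis
  proof cases
    case 1
    then show ?thesis by (auto simp: gS_def WV_def mh_fee_def max_def)
  next
    case 2
    then show ?thesis using assms by (auto simp: gS_def WV_def mh_fee_def)
  next
    case 3
    obtain k where k: "T = length h + k + 3" using 3 by (intro that[of "T - length h - 3"]) simp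
    show ?thesis using assms unfolding k
      by (simp add: gS_def WV_def mh_fee_def ring_distribs)
  qed
qed

lemma loc:
  assumes "mh_valid_hist M T j h" "length h < T" "j \<le> T - 1" "mh_avail T j h a"
    and "0 < p" "p \<le> 1" "f < fA" "f < fB"
  shows "mh_fee f fA fB a + p * WV f fA fB (T - Suc (length h)) (Incl_Dep \<notin> snd ` set h \<and> a \<noteq> Incl_Dep)
    \<le> mh_fee f fA fB (gS fA fB T j h) + p * WV f fA fB (T - Suc (length h)) (Incl_Dep \<notin> snd ` set h \<and> gS fA fB T j h \<noteq> Incl_Dep)"
proof -
  have mx: "f + p * max fA fB \<le> fA + p * fB"
  proof (cases "fA \<le> fB")
    case True then show ?thesis using assms by (simp add: max_def)
  next
    case False
    have "p * (fA - fB) \<le> 1 * (fA - fB)" using False assms by (intro mult_right_mono) auto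
    then show ?thesis using False assms by (simp add: max_def algebra_simps)
  qed
  have lin: "f + p * (fA + r * f + fB) \<le> fA + p * ((r + 1) * f + fB)" for r :: real
  proof -
    have "p * (fA - f) \<le> 1 * (fA - f)" using assms by (intro mult_right_mono) auto
    then show ?thesis by (simp add: algebra_simps)
  qed
  consider "Suc (length h) = T" | "Suc (Suc (length h)) = T" | "Suc (Suc (length h)) < T"
    using assms by linarith
  then show ?thesis
  proof cases
    case 1
    then show ?thesis using assms by (auto simp: gS_def WV_def mh_fee_def mh_avail_def)
  next
    case 2
    then show ?thesis using assms mx by (auto simp: gS_def WV_def mh_fee_def mh_avail_def)
  next
    case 3
    obtain k where k: "T = length h + k + 3" using 3 by (intro that[of "T - length h - 3"]) simp
    have lk: "f + p * (fA + real k * f + fB) \<le> fA + p * ((1 + real k) * f + fB)"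
      using lin[of "real k"] by (simp add: add.commute)
    show ?thesis using assms lk unfolding k
      by (auto simp: gS_def WV_def mh_fee_def mh_avail_def)
  qed
qed

lemma Dsnoc: "(Incl_Dep \<notin> snd ` set (h @ [(m, a)])) = (Incl_Dep \<notin> snd ` set h \<and> a \<noteq> Incl_Dep)"
  by auto

lemma DC: "(Incl_Dep \<noteq> a \<and> P) = (P \<and> a \<noteq> Incl_Dep)"
  by auto

lemma sum_split:
  fixes pw :: "'m \<Rightarrow> real"
  assumes "finite M" "i \<in> M"
  shows "(\<Sum>m\<in>M. pw m * ((if m = i then X else 0) + Y)) = pw i * X + (\<Sum>m\<in>M. pw m) * Y"
proof -
  have "(\<Sum>m\<in>M. pw m * ((if m = i then X else 0) + Y)) = (\<Sum>m\<in>M. (if m = i then pw m * X else 0) + pw m * Y)"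
    by (intro sum.cong) (auto simp: ring_distribs)
  then show ?thesis using assms by (simp add: sum.distrib sum_distrib_right)
qed

lemma cont_eq:
  assumes "finite M" "i \<in> M" "sum pw M = 1" "j \<le> T - 1"
  shows "length h + n = T \<Longrightarrow> mh_cont_util (mh_fee f fA fB) M pw (\<lambda>m. gS fA fB T j) i n h
       = pw i * WV f fA fB n (Incl_Dep \<notin> snd ` set h)"
proof (induction n arbitrary: h)
  case 0
  then show ?case by (simp add: WV_def)
next
  case (Suc n)
  let ?g = "gS fA fB T j h"
  have "mh_cont_util (mh_fee f fA fB) M pw (\<lambda>m. gS fA fB T j) i (Suc n) h
     = (\<Sum>m\<in>M. pw m * ((if m = i then mh_fee f fA fB ?g else 0)
         + pw i * WV f fA fB n (Incl_Dep \<notin> snd ` set h \<and> ?g \<noteq> Incl_Dep)))"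
    using Suc.prems by (simp add: Suc.IH DC)
  also have "\<dots> = pw i * (mh_fee f fA fB ?g + WV f fA fB n (Incl_Dep \<notin> snd ` set h \<and> ?g \<noteq> Incl_Dep))"
    by (subst sum_split[OF assms(1,2)]) (simp add: assms ring_distribs)
  also have "\<dots> = pw i * WV f fA fB (Suc n) (Incl_Dep \<notin> snd ` set h)"
  proof -
    have e: "T - Suc (length h) = n" "T - length h = Suc n" "length h < T" using Suc.prems by auto
    show ?thesis using step_eq[OF e(3) assms(4), of f fA fB] unfolding e(1,2) by simp
  qed
  finally show ?case .
qed

lemma pw_le1:
  fixes pw :: "'m \<Rightarrow> real"
  assumes "finite M" "i \<in> M" "sum pw M = 1" "\<forall>m\<in>M. pw m > 0"
  shows "pw i \<le> 1"
  using member_le_sum[of i M pw] assms by fastforce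

lemma cont_le:
  assumes "finite M" "i \<in> M" "sum pw M = 1" "\<forall>m\<in>M. pw m > 0" "j \<le> T - 1"
    "f < fA" "f < fB" "mh_valid_strategy M T j (\<sigma> i)" "\<forall>m. m \<noteq> i \<longrightarrow> \<sigma> m = gS fA fB T j"
  shows "mh_valid_hist M T j h \<Longrightarrow> length h + n = T \<Longrightarrow> mh_cont_util (mh_fee f fA fB) M pw \<sigma> i n h
       \<le> pw i * WV f fA fB n (Incl_Dep \<notin> snd ` set h)"
proof (induction n arbitrary: h)
  case 0
  then show ?case by (simp add: WV_def)
next
  case (Suc n)
  let ?g = "gS fA fB T j h"
  have lt: "length h < T" using Suc.prems by simp
  have av: "mh_avail T j h (\<sigma> m h)" if "m \<in> M" for m
  proof (cases "m = i")
    case True then show ?thesis using assms(8) Suc.prems lt unfolding mh_valid_strategy_def by auto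
  next
    case False then show ?thesis using assms(9) gS_avail[OF Suc.prems(1) lt] assms(5) by auto
  qed
  have p1: "pw i \<le> 1" "0 < pw i" using pw_le1 assms by auto
  have "mh_cont_util (mh_fee f fA fB) M pw \<sigma> i (Suc n) h
     \<le> (\<Sum>m\<in>M. pw m * ((if m = i then mh_fee f fA fB (\<sigma> m h) else 0)
         + pw i * WV f fA fB n (Incl_Dep \<notin> snd ` set h \<and> \<sigma> m h \<noteq> Incl_Dep)))"
    unfolding mh_cont_util.simps
  proof (intro sum_mono mult_left_mono add_left_mono)
    fix m assume m: "m \<in> M"
    show "mh_cont_util (mh_fee f fA fB) M pw \<sigma> i n (h @ [(m, \<sigma> m h)])
      \<le> pw i * WV f fA fB n (Incl_Dep \<notin> snd ` set h \<and> \<sigma> m h \<noteq> Incl_Dep)"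
      using Suc.IH[of "h @ [(m, \<sigma> m h)]"] valid_snoc[OF Suc.prems(1) lt m av[OF m]] Suc.prems
      by (simp add: DC)
    show "0 \<le> pw m" using assms m by force
  qed
  also have "\<dots> \<le> (\<Sum>m\<in>M. pw m * ((if m = i then mh_fee f fA fB ?g else 0)
         + pw i * WV f fA fB n (Incl_Dep \<notin> snd ` set h \<and> ?g \<noteq> Incl_Dep)))"
  proof (intro sum_mono)
    fix m assume m: "m \<in> M"
    show "pw m * ((if m = i then mh_fee f fA fB (\<sigma> m h) else 0)
         + pw i * WV f fA fB n (Incl_Dep \<notin> snd ` set h \<and> \<sigma> m h \<noteq> Incl_Dep))
      \<le> pw m * ((if m = i then mh_fee f fA fB ?g else 0)
         + pw i * WV f fA fB n (Incl_Dep \<notin> snd ` set h \<and> ?g \<noteq> Incl_Dep))"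
    proof (cases "m = i")
      case True
      have nn: "n = T - Suc (length h)" using Suc.prems by simp
      have "mh_fee f fA fB (\<sigma> i h) + pw i * WV f fA fB n (Incl_Dep \<notin> snd ` set h \<and> \<sigma> i h \<noteq> Incl_Dep)
         \<le> mh_fee f fA fB ?g + pw i * WV f fA fB n (Incl_Dep \<notin> snd ` set h \<and> ?g \<noteq> Incl_Dep)"
        unfolding nn using loc[OF Suc.prems(1) lt assms(5) av[OF assms(2)] p1(2) p1(1) assms(6,7)] .
      then show ?thesis using True p1 by (simp add: mult_left_mono)
    next
      case False then show ?thesis using assms(9) by simp
    qed
  qed
  also have "\<dots> = pw i * (mh_fee f fA fB ?g + WV f fA fB n (Incl_Dep \<notin> snd ` set h \<and> ?g \<noteq> Incl_Dep))"
    by (subst sum_split[OF assms(1,2)]) (simp add: assms ring_distribs)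
  also have "\<dots> = pw i * WV f fA fB (Suc n) (Incl_Dep \<notin> snd ` set h)"
  proof -
    have e: "T - Suc (length h) = n" "T - length h = Suc n" "length h < T" using Suc.prems by auto
    show ?thesis using step_eq[OF e(3) assms(5), of f fA fB] unfolding e(1,2) by simp
  qed
  finally show ?case .
qed

lemma spe_exists:
  fixes M :: "'m set" and pw :: "'m \<Rightarrow> real"
  assumes "finite M" "\<forall>m\<in>M. pw m > 0" "(\<Sum>m\<in>M. pw m) = 1"
    and "j \<le> T - 1" and "f < fA" and "f < fB" and "2 \<le> T"
  shows "mh_SPE f fA fB M pw T j (\<lambda>m. gS fA fB T j)"
  unfolding mh_SPE_def
proof (intro conjI ballI allI impI)
  fix m assume "m \<in> M"
  show "mh_valid_strategy M T j (gS fA fB T j)"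
    unfolding mh_valid_strategy_def using gS_avail assms by fastforce
next
  fix h i \<tau> assume a: "mh_valid_hist M T j h \<and> length h < T \<and> i \<in> M \<and> mh_valid_strategy M T j \<tau>"
  have "mh_cont_util (mh_fee f fA fB) M pw ((\<lambda>m. gS fA fB T j)(i := \<tau>)) i (T - length h) h
     \<le> pw i * WV f fA fB (T - length h) (Incl_Dep \<notin> snd ` set h)"
    by (rule cont_le) (use a assms in auto)
  also have "\<dots> = mh_cont_util (mh_fee f fA fB) M pw (\<lambda>m. gS fA fB T j) i (T - length h) h"
    by (rule cont_eq[symmetric]) (use a assms in auto)
  finally show "mh_cont_util (mh_fee f fA fB) M pw ((\<lambda>m. gS fA fB T j)(i := \<tau>)) i (T - length h) h
     \<le> mh_cont_util (mh_fee f fA fB) M pw (\<lambda>m. gS fA fB T j) i (T - length h) h" .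
next
  fix h i m \<tau> assume a: "mh_valid_hist M T j h \<and> length h < T \<and> i \<in> M \<and> m \<in> M \<and> mh_valid_strategy M T j \<tau>"
  let ?s = "(\<lambda>m. gS fA fB T j)(i := \<tau>)"
  let ?g = "gS fA fB T j h"
  let ?n = "T - Suc (length h)"
  have av: "mh_avail T j h (?s m h)"
    using a gS_avail[of M T j h fA fB] assms unfolding mh_valid_strategy_def by auto
  have vc: "mh_valid_hist M T j (h @ [(m, ?s m h)])" using valid_snoc[OF _ _ _ av] a by auto
  have c1: "mh_cont_util (mh_fee f fA fB) M pw ?s i ?n (h @ [(m, ?s m h)])
     \<le> pw i * WV f fA fB ?n (Incl_Dep \<notin> snd ` set h \<and> ?s m h \<noteq> Incl_Dep)"
    using cont_le[where \<sigma>="?s" and h="h @ [(m, ?s m h)]" and n="?n" and M=M and pw=pw and i=i and T=T and j=j and f=f and fA=fA and fB=fB] vc a assms by (auto simp: DC)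
  have c2: "mh_cont_util (mh_fee f fA fB) M pw (\<lambda>m. gS fA fB T j) i ?n (h @ [(m, ?g)])
     = pw i * WV f fA fB ?n (Incl_Dep \<notin> snd ` set h \<and> ?g \<noteq> Incl_Dep)"
    using cont_eq[where h="h @ [(m, ?g)]" and n="?n" and M=M and pw=pw and i=i and T=T and j=j and f=f and fA=fA and fB=fB] a assms by (auto simp: DC)
  show "mh_dec_util (mh_fee f fA fB) M pw T ?s i h m \<le> mh_dec_util (mh_fee f fA fB) M pw T (\<lambda>m. gS fA fB T j) i h m"
  proof (cases "m = i")
    case True
    have p1: "pw i \<le> 1" "0 < pw i" using pw_le1[of M i pw] assms a by auto
    have "mh_fee f fA fB (\<tau> h) + pw i * WV f fA fB ?n (Incl_Dep \<notin> snd ` set h \<and> \<tau> h \<noteq> Incl_Dep)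
       \<le> mh_fee f fA fB ?g + pw i * WV f fA fB ?n (Incl_Dep \<notin> snd ` set h \<and> ?g \<noteq> Incl_Dep)"
      using loc[of M T j h "\<tau> h" "pw i" f fA fB] a assms p1 av True by auto
    then show ?thesis using c1 c2 True unfolding mh_dec_util_def by auto
  next
    case False
    then show ?thesis using c1 c2 unfolding mh_dec_util_def by auto
  qed
qed

lemma cont_one:
  fixes pw :: "'m \<Rightarrow> real"
  assumes "finite M" "i \<in> M"
  shows "mh_cont_util fe M pw \<sigma> i (Suc 0) h = pw i * fe (\<sigma> i h)"
proof -
  have "mh_cont_util fe M pw \<sigma> i (Suc 0) h = (\<Sum>m\<in>M. pw m * ((if m = i then fe (\<sigma> i h) else 0) + 0))"
    unfolding mh_cont_util.simps by (intro sum.cong) auto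
  then show ?thesis using sum_split[OF assms, of pw "fe (\<sigma> i h)" 0] by simp
qed

lemma fee_le: "f < fA \<Longrightarrow> mh_fee f fA fB a \<le> max fA fB"
  by (cases a) (auto simp: mh_fee_def)

lemma spe_last:
  assumes spe: "mh_SPE f fA fB M pw T j \<sigma>"
    and h: "mh_valid_hist M T j h" "Suc (length h) = T" "Incl_Dep \<in> snd ` set h"
    and m: "m \<in> M" and ff: "f < fB"
  shows "\<sigma> m h = Incl_Col"
proof -
  define \<tau> where "\<tau> = (\<lambda>h'. if h' = h then Incl_Col else Unrelated)"
  have nc: "Incl_Col \<notin> snd ` set h" using valid_nocol[OF h(1)] h(2) by auto
  have vt: "mh_valid_strategy M T j \<tau>"
    unfolding mh_valid_strategy_def \<tau>_def using nc h(2) by (auto simp: mh_avail_def)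
  have "mh_dec_util (mh_fee f fA fB) M pw T (\<sigma>(m := \<tau>)) m h m \<le> mh_dec_util (mh_fee f fA fB) M pw T \<sigma> m h m"
    using spe h vt m unfolding mh_SPE_def by auto
  then have le: "fB \<le> mh_fee f fA fB (\<sigma> m h)"
    using h(2) unfolding mh_dec_util_def by (simp add: \<tau>_def mh_fee_def)
  have "mh_avail T j h (\<sigma> m h)" using spe m h unfolding mh_SPE_def mh_valid_strategy_def by auto
  then show ?thesis using le ff h(3) by (cases "\<sigma> m h") (auto simp: mh_avail_def mh_fee_def)
qed

lemma spe_pen:
  fixes M :: "'m set" and pw :: "'m \<Rightarrow> real"
  assumes spe: "mh_SPE f fA fB M pw T j \<sigma>"
    and h: "mh_valid_hist M T j h" "Suc (Suc (length h)) = T" "Incl_Dep \<notin> snd ` set h"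
    and m: "m \<in> M" and ff: "f < fB" "f < fA" and jT: "j \<le> T - 1"
    and fin: "finite M" "\<forall>m\<in>M. pw m > 0" "(\<Sum>m\<in>M. pw m) = 1"
  shows "\<sigma> m h = Incl_Dep"
proof (rule ccontr)
  assume ne: "\<sigma> m h \<noteq> Incl_Dep"
  define \<tau> where "\<tau> = (\<sigma> m)(h := Incl_Dep)"
  have lt: "length h < T" using h by simp
  have vs: "mh_valid_strategy M T j (\<sigma> m)" using spe m unfolding mh_SPE_def by auto
  have vt: "mh_valid_strategy M T j \<tau>"
    using vs h jT unfolding mh_valid_strategy_def \<tau>_def by (auto simp: mh_avail_def)
  have p1: "pw m \<le> 1" "0 < pw m" using pw_le1[of M m pw] fin m by auto
  have n1: "T - Suc (length h) = Suc 0" using h by simp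
  let ?hD = "h @ [(m, Incl_Dep)]"
  have avD: "mh_avail T j h Incl_Dep" using h jT by (auto simp: mh_avail_def)
  have vD: "mh_valid_hist M T j ?hD" using valid_snoc[OF h(1) lt m avD] .
  have cD: "\<sigma> m ?hD = Incl_Col" by (rule spe_last[OF spe vD]) (use h m ff in auto)
  have "mh_dec_util (mh_fee f fA fB) M pw T (\<sigma>(m := \<tau>)) m h m = fA + pw m * fB"
    unfolding mh_dec_util_def n1 cont_one[OF fin(1) m] using cD by (simp add: \<tau>_def mh_fee_def)
  moreover have "mh_dec_util (mh_fee f fA fB) M pw T \<sigma> m h m \<le> f + pw m * max fA fB"
  proof -
    have "mh_avail T j h (\<sigma> m h)" using vs h lt unfolding mh_valid_strategy_def by auto
    then have u: "\<sigma> m h = Unrelated" using ne h by (auto simp: mh_avail_def)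
    have "pw m * mh_fee f fA fB (\<sigma> m (h @ [(m, \<sigma> m h)])) \<le> pw m * max fA fB"
      using fee_le[OF ff(2)] p1 by (intro mult_left_mono) auto
    then show ?thesis unfolding mh_dec_util_def n1 cont_one[OF fin(1) m] using u by (simp add: mh_fee_def)
  qed
  moreover have "mh_dec_util (mh_fee f fA fB) M pw T (\<sigma>(m := \<tau>)) m h m \<le> mh_dec_util (mh_fee f fA fB) M pw T \<sigma> m h m"
    using spe h vt m lt unfolding mh_SPE_def by auto
  moreover have "f + pw m * max fA fB < fA + pw m * fB"
  proof (cases "fA \<le> fB")
    case True then show ?thesis using ff by (simp add: max_def)
  next
    case False
    have "pw m * (fA - fB) \<le> 1 * (fA - fB)" using False p1 by (intro mult_right_mono) auto
    then show ?thesis using False ff by (simp add: max_def algebra_simps)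
  qed
  ultimately show False by linarith
qed

lemma run_snoc: "mh_run \<sigma> h (xs @ [x]) = mh_run \<sigma> h xs @ [(x, \<sigma> x (mh_run \<sigma> h xs))]"
  by (induction xs arbitrary: h) auto

lemma run_len: "length (mh_run \<sigma> h xs) = length h + length xs"
  by (induction xs arbitrary: h) auto

theorem lemma2:
  fixes M :: "'m set" and pw :: "'m \<Rightarrow> real"
    and T j :: nat and f fA fB vdep vcol :: real
  assumes "finite M" and "M \<noteq> {}"
    and "\<forall>m\<in>M. pw m > 0" and "(\<Sum>m\<in>M. pw m) = 1"
    and "2 \<le> T" and "1 \<le> j" and "j \<le> T - 1"
    and "f < fA" and "fA < vdep"
    and "f < fB" and "fB < vcol"
  shows "(\<exists>\<sigma>. mh_SPE f fA fB M pw T j \<sigma>)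
       \<and> (\<forall>\<sigma> ms. mh_SPE f fA fB M pw T j \<sigma> \<and> set ms \<subseteq> M \<and> length ms = T \<longrightarrow>
             (let H = mh_run \<sigma> [] ms in
                Incl_Dep \<in> snd ` set H \<and> Incl_Col \<in> snd ` set H
              \<and> tokens_A vdep fA H = vdep - fA \<and> tokens_B vcol fB H = vcol - fB))"
proof (intro conjI allI impI)
  show "\<exists>\<sigma>. mh_SPE f fA fB M pw T j \<sigma>"
    using spe_exists[of M pw j T f fA fB] assms by blast
next
  fix \<sigma> ms assume a: "mh_SPE f fA fB M pw T j \<sigma> \<and> set ms \<subseteq> M \<and> length ms = T"
  then have spe: "mh_SPE f fA fB M pw T j \<sigma>" and sm: "set ms \<subseteq> M" and lm: "length ms = T" by auto
  define hk where "hk k = mh_run \<sigma> [] (take k ms)" for k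
  have msk: "ms ! k \<in> M" if "k < T" for k using sm lm that by auto
  have hs: "hk (Suc k) = hk k @ [(ms ! k, \<sigma> (ms ! k) (hk k))]" if "k < T" for k
    unfolding hk_def using that lm by (simp add: take_Suc_conv_app_nth run_snoc)
  have hl: "length (hk k) = k" if "k \<le> T" for k
    unfolding hk_def using that lm by (simp add: run_len)
  have hv: "mh_valid_hist M T j (hk k)" if "k \<le> T" for k
    using that
  proof (induction k)
    case 0
    then show ?case by (simp add: hk_def mh_valid_hist_def)
  next
    case (Suc k)
    then have k: "k < T" by simp
    have "mh_avail T j (hk k) (\<sigma> (ms ! k) (hk k))"
      using spe msk[OF k] Suc hl[of k] unfolding mh_SPE_def mh_valid_strategy_def by auto
    then show ?case using hs[OF k] valid_snoc[OF Suc.IH _ msk[OF k]] Suc hl[of k] by auto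
  qed
  have t1: "Suc (T - 2) = T - 1" "Suc (T - 1) = T" "T - 2 < T" "T - 1 < T" using assms(5) by auto
  have d2: "Incl_Dep \<in> snd ` set (hk (T - 1))"
  proof (cases "Incl_Dep \<in> snd ` set (hk (T - 2))")
    case True
    then show ?thesis using hs[OF t1(3)] t1(1) by force
  next
    case False
    have "\<sigma> (ms ! (T - 2)) (hk (T - 2)) = Incl_Dep"
      by (rule spe_pen[OF spe hv]) (use False assms hl t1 msk in auto)
    then show ?thesis using hs[OF t1(3)] t1(1) by force
  qed
  have "\<sigma> (ms ! (T - 1)) (hk (T - 1)) = Incl_Col"
    by (rule spe_last[OF spe hv]) (use d2 assms hl t1 msk in auto)
  then have H: "hk T = hk (T - 1) @ [(ms ! (T - 1), Incl_Col)]" using hs[OF t1(4)] t1(2) by simp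
  have HH: "mh_run \<sigma> [] ms = hk T" unfolding hk_def using lm by simp
  show "let H = mh_run \<sigma> [] ms in
                Incl_Dep \<in> snd ` set H \<and> Incl_Col \<in> snd ` set H
              \<and> tokens_A vdep fA H = vdep - fA \<and> tokens_B vcol fB H = vcol - fB"
    unfolding HH H Let_def tokens_A_def tokens_B_def using d2 by auto
qed

end
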